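(* Let $1<p<\infty$ and $1<q<\infty$. Then there exists a measurable function $f$ on $\mathbb{R}^2$ such that almost every $x$-section $f_x$ and almost every $y$-section $f_y$ belong to $\operatorname{Lip}\frac1p$, the functions $x\mapsto\|f_x\|_{\operatorname{Lip}\frac1p}$ and $y\mapsto\|f_y\|_{\operatorname{Lip}\frac1p}$ both belong to $L^{p,q}(\mathbb{R})$, but $f\notin L^\infty(\mathbb{R}^2)$.
   Context: For a function $f$ on $\mathbb{R}^2$, $f_x(y)=f(x,y)$ and $f_y(x)=f(x,y)$ denote the sections. For $\varphi$ on $\mathbb{R}$, $\Delta_h\varphi(t)=\varphi(t+h)-\varphi(t)$; for $\alpha\in(0,1]$, $\operatorname{Lip}\alpha$ is the class of $\varphi\in L^\infty(\mathbb{R})$ with $\|\varphi\|^*_{\operatorname{Lip}\alpha}=\sup_{h>0}h^{-\alpha}\|\Delta_h\varphi\|_\infty<\infty$ ($\|\cdot\|_\infty$ the essential supremum), and $\|\varphi\|_{\operatorname{Lip}\alpha}=\|\varphi\|_\infty+\|\varphi\|^*_{\operatorname{Lip}\alpha}$. For measurable a.e. finite $g$ on $\mathbb{R}$ with $|\{|g|>s\}|<\infty$ for all $s>0$, $g^*$ is its non-increasing rearrangement on $(0,\infty)$, and $L^{p,q}(\mathbb{R})$ consists of such $g$ with $\|g\|_{L^{p,q}}=\left(\int_0^\infty(t^{1/p}g^*(t))^q\frac{dt}{t}\right)^{1/q}<\infty$. *)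

theory Defs
  imports "HOL-Analysis.Analysis" "HOL-Probability.Essential_Supremum"
begin

definition linf_norm :: "('a::euclidean_space \<Rightarrow> real) \<Rightarrow> ereal" where
  "linf_norm g = esssup lebesgue (\<lambda>t. ereal \<bar>g t\<bar>)"

definition in_Linf :: "('a::euclidean_space \<Rightarrow> real) \<Rightarrow> bool" where
  "in_Linf g \<longleftrightarrow> g \<in> borel_measurable lebesgue \<and> linf_norm g < \<infinity>"

definition fdiff :: "real \<Rightarrow> (real \<Rightarrow> real) \<Rightarrow> real \<Rightarrow> real" where
  "fdiff h \<phi> t = \<phi> (t + h) - \<phi> t"

definition lip_seminorm :: "real \<Rightarrow> (real \<Rightarrow> real) \<Rightarrow> ereal" where
  "lip_seminorm \<alpha> \<phi> = (SUP h\<in>{0<..}. ereal (h powr (-\<alpha>)) * linf_norm (fdiff h \<phi>))"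

definition in_Lip :: "real \<Rightarrow> (real \<Rightarrow> real) \<Rightarrow> bool" where
  "in_Lip \<alpha> \<phi> \<longleftrightarrow> in_Linf \<phi> \<and> lip_seminorm \<alpha> \<phi> < \<infinity>"

definition lip_norm :: "real \<Rightarrow> (real \<Rightarrow> real) \<Rightarrow> real" where
  "lip_norm \<alpha> \<phi> = real_of_ereal (linf_norm \<phi> + lip_seminorm \<alpha> \<phi>)"

definition distr_fun :: "(real \<Rightarrow> real) \<Rightarrow> real \<Rightarrow> ennreal" where
  "distr_fun g s = emeasure lebesgue {x. \<bar>g x\<bar> > s}"

definition rearr :: "(real \<Rightarrow> real) \<Rightarrow> real \<Rightarrow> real" where
  "rearr g t = Inf {s. 0 \<le> s \<and> distr_fun g s \<le> ennreal t}"

definition in_Lpq :: "real \<Rightarrow> real \<Rightarrow> (real \<Rightarrow> real) \<Rightarrow> bool" where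
  "in_Lpq p q g \<longleftrightarrow> g \<in> borel_measurable lebesgue \<and>
     (\<forall>s>0. distr_fun g s < \<infinity>) \<and>
     (\<integral>\<^sup>+ t \<in> {0<..}. ennreal ((t powr (1/p) * rearr g t) powr q / t) \<partial>lborel) < \<infinity>"

end

theory Submission
  imports Defs "HOL-Real_Asymp.Real_Asymp"
begin

definition LL :: "real \<Rightarrow> real" where "LL s = 1 + ln (1 + 1/s)"
definition uu :: "real \<Rightarrow> real" where "uu s = ln (LL s)"

lemma LL_ge1: "s > 0 \<Longrightarrow> LL s > 1"
proof -
  assume "s > 0" then have "1 + 1/s > 1" by simp
  then have "ln (1 + 1/s) > 0" by (rule ln_gt_zero)
  then show ?thesis unfolding LL_def by simp
qed

lemma uu_pos: "s > 0 \<Longrightarrow> uu s > 0"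
  unfolding uu_def using LL_ge1 ln_gt_zero by blast

lemma LL_mono: "0 < a \<Longrightarrow> a \<le> b \<Longrightarrow> LL b \<le> LL a"
  unfolding LL_def by (simp add: frac_le add_pos_pos)

lemma uu_mono: "0 < a \<Longrightarrow> a \<le> b \<Longrightarrow> uu b \<le> uu a"
  unfolding uu_def using LL_mono LL_ge1[of b] LL_ge1[of a] by simp

lemma LL_diff: assumes "0 < a" "a \<le> b" shows "LL a - LL b \<le> ln (b / a)"
proof -
  have p: "1 + 1/a > 0" "1 + 1/b > 0" using assms by (simp_all add: add_pos_pos)
  then have e: "LL a - LL b = ln ((1 + 1/a) / (1 + 1/b))" unfolding LL_def by (simp add: ln_div)
  have "(1 + 1/a) / (1 + 1/b) = (b/a) * ((a+1)/(b+1))" using assms by (simp add: field_simps)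
  also have "\<dots> \<le> b / a" using assms by (intro mult_left_le) auto
  finally have le: "(1 + 1/a) / (1 + 1/b) \<le> b / a" .
  have "(1 + 1/a) / (1 + 1/b) > 0" using p by simp
  then have "ln ((1 + 1/a) / (1 + 1/b)) \<le> ln (b/a)" using le by (subst ln_le_cancel_iff) auto
  then show ?thesis using e by simp
qed

lemma ln_le_powr: fixes y \<beta> :: real assumes "y > 0" "\<beta> > 0" shows "ln y \<le> y powr \<beta> / \<beta>"
proof -
  have "ln (y powr \<beta>) \<le> y powr \<beta> - 1" using ln_le_minus_one[of "y powr \<beta>"] assms by simp
  then have "\<beta> * ln y \<le> y powr \<beta>" using assms by (simp add: ln_powr)
  then show ?thesis using assms by (simp add: field_simps)
qed

lemma phi_bound:
  fixes a :: real assumes a: "0 < a" "a < 1"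
  shows "\<exists>C>0. \<forall>t>0. ln (1+t) * (1 + ln (1+t)) \<le> C * t powr a"
proof -
  define C where "C = (2/a)*(1+2/a)*2 + 2"
  have Cp: "C > 0" unfolding C_def using a by (simp add: add_pos_pos)
  have "ln (1+t) * (1 + ln (1+t)) \<le> C * t powr a" if t: "t > 0" for t
  proof (cases "t \<le> 1")
    case True
    have l1: "ln (1+t) \<le> t" using t by (intro ln_add_one_self_le_self) simp
    have l0: "ln (1+t) \<ge> 0" using t by simp
    have "ln (1+t) \<le> ln 2" using True t by simp
    also have "ln (2::real) \<le> 1" using ln_le_minus_one[of 2] by simp
    finally have l2: "1 + ln (1+t) \<le> 2" by simp
    have "ln (1+t) * (1 + ln (1+t)) \<le> t * 2" using l0 l1 l2 by (intro mult_mono) auto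
    also have "t \<le> t powr a" using powr_mono'[of a 1 t] a t True by simp
    then have "t * 2 \<le> 2 * t powr a" by simp
    also have "2 * t powr a \<le> C * t powr a" unfolding C_def using a
      by (intro mult_right_mono) (auto simp: add_pos_pos)
    finally show ?thesis .
  next
    case False
    define X where "X = (2*t) powr (a/2)"
    have X1: "X \<ge> 1" unfolding X_def using False a by (intro ge_one_powr_ge_zero) auto
    have "ln (1+t) \<le> (1+t) powr (a/2) / (a/2)" using t a by (intro ln_le_powr) auto
    also have "(1+t) powr (a/2) \<le> X" unfolding X_def using False a by (intro powr_mono2) auto
    then have "(1+t) powr (a/2) / (a/2) \<le> X / (a/2)" using a by (simp add: divide_right_mono)
    finally have l1: "ln (1+t) \<le> (2/a) * X" by (simp add: mult.commute)
    have l0: "ln (1+t) \<ge> 0" using t by simp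
    have l2: "1 + ln (1+t) \<le> (1 + 2/a) * X" using l1 X1 by (simp add: algebra_simps)
    have "ln (1+t) * (1 + ln (1+t)) \<le> ((2/a) * X) * ((1 + 2/a) * X)"
      using l0 l1 l2 by (intro mult_mono) auto
    also have "\<dots> = (2/a)*(1+2/a) * (X*X)" by simp
    also have "X * X = (2*t) powr a" unfolding X_def using t by (simp add: powr_add[symmetric])
    also have "(2*t) powr a = 2 powr a * t powr a" using t by (simp add: powr_mult)
    also have "(2::real) powr a \<le> 2" using powr_mono[of a 1 2] a by simp
    then have "2 powr a * t powr a \<le> 2 * t powr a" by (simp add: mult_right_mono)
    then have "(2/a)*(1+2/a) * (2 powr a * t powr a) \<le> (2/a)*(1+2/a) * (2 * t powr a)"
      using a by (intro mult_left_mono) (auto simp: add_pos_pos)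
    also have "\<dots> \<le> C * t powr a" unfolding C_def by (simp add: algebra_simps)
    finally show ?thesis .
  qed
  then show ?thesis using Cp by blast
qed

lemma gap_bound:
  fixes al :: real assumes al: "0 < al" "al < 1"
  shows "\<exists>C0>0. \<forall>r a b h. 0 < r \<longrightarrow> r \<le> a \<longrightarrow> a \<le> b \<longrightarrow> b - a \<le> h \<longrightarrow> 0 < h \<longrightarrow>
            uu a - uu b \<le> C0 * (h/r) powr al / LL r"
proof -
  obtain C where Cp: "C > 0" and C: "\<And>t. t > 0 \<Longrightarrow> ln (1+t) * (1 + ln (1+t)) \<le> C * t powr al"
    using phi_bound[OF al] by blast
  define C0 where "C0 = 2*C + 1/al"
  have C0p: "C0 > 0" unfolding C0_def using Cp al by (simp add: add_pos_pos)
  have main: "uu a - uu b \<le> C0 * (h/r) powr al / LL r"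
    if r: "0 < r" "r \<le> a" "a \<le> b" "b - a \<le> h" "0 < h" for r a b h
  proof -
    define t where "t = h / r"
    define lam where "lam = a / r"
    define d where "d = LL a - LL b"
    have tp: "t > 0" unfolding t_def using r by simp
    have lam1: "lam \<ge> 1" unfolding lam_def using r by simp
    have ap: "a > 0" "b > 0" using r by auto
    have d0: "d \<ge> 0" unfolding d_def using LL_mono[of a b] r by simp
    have "d \<le> ln (b/a)" unfolding d_def using LL_diff[of a b] r by simp
    also have "ln (b/a) \<le> ln (1 + h/a)"
    proof -
      have "b/a \<le> 1 + h/a" using r ap by (simp add: field_simps)
      moreover have "h/a > 0" using r ap by simp
      ultimately show ?thesis using ap by (subst ln_le_cancel_iff) auto
    qed
    finally have d1: "d \<le> ln (1 + h/a)" .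
    have d2: "d \<le> h/a" using d1 ln_add_one_self_le_self[of "h/a"] r ap by simp
    have "ln (1 + h/a) \<le> ln (1 + t)"
    proof -
      have "h/a \<le> h/r" using r by (intro divide_left_mono) auto
      then show ?thesis unfolding t_def using r ap by (subst ln_le_cancel_iff) (auto simp: add_pos_nonneg)
    qed
    with d1 have d3: "d \<le> ln (1+t)" by simp
    have LLb: "LL b > 1" "LL a > 1" "LL r > 1" using LL_ge1 ap r by auto
    have u1: "uu a - uu b \<le> d / LL b"
    proof -
      have "uu a - uu b = ln (LL a / LL b)" unfolding uu_def using LLb by (simp add: ln_div)
      also have "\<dots> \<le> LL a / LL b - 1" using LLb by (intro ln_le_minus_one) simp
      also have "\<dots> = d / LL b" unfolding d_def using LLb by (simp add: field_simps)
      finally show ?thesis .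
    qed
    have lbr0: "ln (b/r) \<ge> 0" using r by simp
    have LLr: "LL r \<le> LL b * (1 + ln (b/r))"
    proof -
      have "LL r - LL b \<le> ln (b/r)" using LL_diff[of r b] r by simp
      moreover have "ln (b/r) \<le> LL b * ln (b/r)" using LLb lbr0 by (simp add: mult_le_cancel_right1)
      ultimately show ?thesis by (simp add: algebra_simps)
    qed
    have lbr: "ln (b/r) \<le> ln lam + ln (1+t)"
    proof -
      have "b/r \<le> (a+h)/r" using r by (intro divide_right_mono) auto
      also have "(a+h)/r = lam + t" unfolding lam_def t_def by (simp add: add_divide_distrib)
      also have "t \<le> lam * t" using lam1 tp by simp
      then have "lam + t \<le> lam * (1+t)" by (simp add: algebra_simps)
      finally have "b/r \<le> lam * (1+t)" .
      then have "ln (b/r) \<le> ln (lam * (1+t))" using r ap tp lam1 by (subst ln_le_cancel_iff) auto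
      also have "\<dots> = ln lam + ln (1+t)" using lam1 tp by (simp add: ln_mult)
      finally show ?thesis .
    qed
    have lnl0: "ln lam \<ge> 0" using lam1 by simp
    have T1: "d * (1 + ln (1+t)) \<le> C * t powr al"
    proof -
      have "d * (1 + ln (1+t)) \<le> ln (1+t) * (1 + ln (1+t))" using d3 tp by (intro mult_right_mono) auto
      also have "\<dots> \<le> C * t powr al" using C tp by blast
      finally show ?thesis .
    qed
    have T2: "d * ln lam \<le> (C + 1/al) * t powr al"
    proof (cases "lam \<le> t")
      case True
      have "ln lam \<le> ln (1+t)" using True lam1 tp by (subst ln_le_cancel_iff) auto
      then have "d * ln lam \<le> ln (1+t) * ln (1+t)" using d0 d3 lnl0 by (intro mult_mono) auto
      also have "\<dots> \<le> ln (1+t) * (1 + ln (1+t))" using tp by (intro mult_left_mono) auto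
      also have "\<dots> \<le> C * t powr al" using C tp by blast
      also have "\<dots> \<le> (C + 1/al) * t powr al" using al by (intro mult_right_mono) auto
      finally show ?thesis .
    next
      case False
      have hat: "h/a = t / lam" unfolding t_def lam_def using r ap by (simp add: field_simps)
      have "d * ln lam \<le> (t / lam) * (lam powr al / al)"
        using d2 d0 lnl0 ln_le_powr[of lam al] lam1 al hat by (intro mult_mono) auto
      also have "\<dots> = t * lam powr (al - 1) / al" using lam1 by (simp add: powr_diff field_simps)
      also have "lam powr (al - 1) \<le> t powr (al - 1)" using False tp al by (intro powr_mono2') auto
      then have "t * lam powr (al - 1) / al \<le> t * t powr (al - 1) / al"
        using tp al by (intro divide_right_mono mult_left_mono) auto
      also have "t * t powr (al - 1) = t powr al" using tp by (simp add: powr_diff)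
      also have "t powr al / al \<le> (C + 1/al) * t powr al" using Cp al by (simp add: field_simps)
      finally show ?thesis .
    qed
    have "(uu a - uu b) * LL r \<le> (d / LL b) * (LL b * (1 + ln (b/r)))"
      using u1 LLr LLb d0 by (intro mult_mono) auto
    also have "\<dots> = d * (1 + ln (b/r))" using LLb by simp
    also have "\<dots> \<le> d * (1 + ln (1+t)) + d * ln lam" using mult_left_mono[OF lbr d0] by (simp add: algebra_simps)
    also have "\<dots> \<le> C0 * t powr al" using T1 T2 unfolding C0_def by (simp add: algebra_simps)
    finally have "(uu a - uu b) * LL r \<le> C0 * t powr al" .
    then show ?thesis unfolding t_def using LLb by (simp add: pos_le_divide_eq)
  qed
  show ?thesis using C0p main by blast
qed

lemma borel_to_lebesgue: "f \<in> borel_measurable borel \<Longrightarrow> f \<in> borel_measurable lebesgue"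
  by (rule measurable_completion) simp

definition VV :: "real \<Rightarrow> real" where "VV s = max 0 (uu s - uu 1)"
definition UU :: "real \<Rightarrow> real" where "UU t = VV \<bar>t\<bar>"

lemma uu0: "uu 0 = 0" unfolding uu_def LL_def by simp

lemma VV_nonneg: "VV s \<ge> 0" unfolding VV_def by simp
lemma UU_nonneg: "UU s \<ge> 0" unfolding UU_def using VV_nonneg by simp

lemma VV_mono: "0 < a \<Longrightarrow> a \<le> b \<Longrightarrow> VV b \<le> VV a"
  unfolding VV_def using uu_mono[of a b] by simp

lemma VV_zero: "s = 0 \<or> s \<ge> 1 \<Longrightarrow> VV s = 0"
  unfolding VV_def using uu_mono[of 1 s] uu0 uu_pos[of 1] by auto

lemma UU_zero: "x = 0 \<or> \<bar>x\<bar> \<ge> 1 \<Longrightarrow> UU x = 0"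
  unfolding UU_def using VV_zero by auto

lemma VV_le_uu: "s > 0 \<Longrightarrow> VV s \<le> uu s"
  unfolding VV_def using uu_pos[of s] uu_pos[of 1] by simp

lemma VV_lip: "\<bar>VV a - VV b\<bar> \<le> \<bar>uu a - uu b\<bar>"
  unfolding VV_def by simp

lemma VV_unbounded: "\<exists>d>0. \<forall>s. 0 < s \<and> s < d \<longrightarrow> VV s > z"
proof -
  define d where "d = exp (- exp (z + uu 1))"
  have "VV s > z" if s: "0 < s" "s < d" for s
  proof -
    have "ln s < ln d" using s by (subst ln_less_cancel_iff) (auto simp: d_def)
    then have "ln s < - exp (z + uu 1)" unfolding d_def by simp
    then have "exp (z + uu 1) < ln (1/s)" using s by (simp add: ln_div)
    also have "ln (1/s) \<le> ln (1 + 1/s)" using s by (subst ln_le_cancel_iff) (auto simp: add_pos_pos)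
    finally have "exp (z + uu 1) < LL s" unfolding LL_def by simp
    then have "ln (exp (z + uu 1)) < ln (LL s)" using LL_ge1[of s] s by (subst ln_less_cancel_iff) auto
    then have "z + uu 1 < uu s" unfolding uu_def by simp
    then show ?thesis unfolding VV_def by simp
  qed
  moreover have "d > 0" unfolding d_def by simp
  ultimately show ?thesis by blast
qed

lemma UU_measurable[measurable]: "UU \<in> borel_measurable borel"
  unfolding UU_def VV_def uu_def LL_def by measurable

lemma min_UU_eq: assumes "r > 0" "t \<noteq> 0" shows "min (VV r) (UU t) = VV (max \<bar>t\<bar> r)"
proof (cases "\<bar>t\<bar> \<le> r")
  case True
  then have "VV r \<le> VV \<bar>t\<bar>" using assms by (intro VV_mono) auto
  then show ?thesis using True unfolding UU_def by (simp add: max_def min_def)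
next
  case False
  then have "VV \<bar>t\<bar> \<le> VV r" using assms by (intro VV_mono) auto
  then show ?thesis using False unfolding UU_def by (simp add: max_def min_def)
qed

lemma section_diff:
  assumes al: "0 < al" "al < 1"
  obtains C0 where "C0 > 0" "\<And>r t h. 0 < r \<Longrightarrow> t \<noteq> 0 \<Longrightarrow> t + h \<noteq> 0 \<Longrightarrow> 0 < h \<Longrightarrow>
     \<bar>min (VV r) (UU (t+h)) - min (VV r) (UU t)\<bar> \<le> C0 * (h/r) powr al / LL r"
proof -
  obtain C0 where C0p: "C0 > 0" and C0: "\<And>r a b h. 0 < r \<Longrightarrow> r \<le> a \<Longrightarrow> a \<le> b \<Longrightarrow> b - a \<le> h \<Longrightarrow> 0 < h \<Longrightarrow>
            uu a - uu b \<le> C0 * (h/r) powr al / LL r"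
    using gap_bound[OF al] by blast
  have "\<bar>min (VV r) (UU (t+h)) - min (VV r) (UU t)\<bar> \<le> C0 * (h/r) powr al / LL r"
    if r: "0 < r" "t \<noteq> 0" "t + h \<noteq> 0" "0 < h" for r t h
  proof -
    define s where "s = max \<bar>t+h\<bar> r"
    define s' where "s' = max \<bar>t\<bar> r"
    have e: "\<bar>min (VV r) (UU (t+h)) - min (VV r) (UU t)\<bar> = \<bar>VV s - VV s'\<bar>"
      unfolding s_def s'_def using r min_UU_eq by simp
    have ss: "\<bar>s - s'\<bar> \<le> h" unfolding s_def s'_def using r(4) by (simp add: max_def abs_if split: if_splits) 
    have "\<bar>VV s - VV s'\<bar> \<le> \<bar>uu s - uu s'\<bar>" by (rule VV_lip)
    also have "\<dots> \<le> C0 * (h/r) powr al / LL r"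
    proof (cases "s \<le> s'")
      case True
      have "uu s' \<le> uu s" using True r unfolding s_def by (intro uu_mono) auto
      then have "\<bar>uu s - uu s'\<bar> = uu s - uu s'" by simp
      also have "\<dots> \<le> C0 * (h/r) powr al / LL r" using True ss r unfolding s_def s'_def
        by (intro C0) auto
      finally show ?thesis .
    next
      case False
      have "uu s \<le> uu s'" using False r unfolding s'_def by (intro uu_mono) auto
      then have "\<bar>uu s - uu s'\<bar> = uu s' - uu s" by simp
      also have "\<dots> \<le> C0 * (h/r) powr al / LL r" using False ss r unfolding s_def s'_def
        by (intro C0) auto
      finally show ?thesis .
    qed
    finally show ?thesis using e by simp
  qed
  then show ?thesis using that C0p by blast
qed

definition wM :: "real \<Rightarrow> real \<Rightarrow> real" where "wM M = (\<lambda>y. min M (UU y))"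
definition Enorm :: "real \<Rightarrow> real \<Rightarrow> ereal" where
  "Enorm al M = linf_norm (wM M) + lip_seminorm al (wM M)"

lemma wM_borel[measurable]: "wM M \<in> borel_measurable borel"
  unfolding wM_def by measurable

lemma wM_leb[measurable]: "wM M \<in> borel_measurable lebesgue"
  by (rule borel_to_lebesgue) simp

lemma fdiff_wM_leb[measurable]: "fdiff h (wM M) \<in> borel_measurable lebesgue"
  unfolding fdiff_def by (rule borel_to_lebesgue) measurable

lemma lebesgue_nonzero: "emeasure (lebesgue :: real measure) (space lebesgue) \<noteq> 0"
proof -
  have "emeasure (lebesgue :: real measure) (space lebesgue) = emeasure lborel (UNIV::real set)"
    by (simp add: emeasure_completion)
  then show ?thesis by simp
qed

lemma linf_norm_nonneg:
  fixes g :: "real \<Rightarrow> real"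
  assumes [measurable]: "g \<in> borel_measurable lebesgue" shows "0 \<le> linf_norm g"
proof -
  have "esssup lebesgue (\<lambda>t::real. (0::ereal)) \<le> esssup lebesgue (\<lambda>t. ereal \<bar>g t\<bar>)"
    by (rule esssup_mono) auto
  then show ?thesis unfolding linf_norm_def using esssup_const[OF lebesgue_nonzero, of "0::ereal"] by simp
qed

lemma linf_norm_le:
  fixes g :: "real \<Rightarrow> real"
  assumes [measurable]: "g \<in> borel_measurable lebesgue" and "AE t in lebesgue. \<bar>g t\<bar> \<le> c"
  shows "linf_norm g \<le> ereal c"
  unfolding linf_norm_def using assms(2) by (intro esssup_I) (auto elim: eventually_mono)

lemma linf_norm_mono:
  fixes g g' :: "real \<Rightarrow> real"
  assumes [measurable]: "g \<in> borel_measurable lebesgue" and "\<And>t. \<bar>g t\<bar> \<le> \<bar>g' t\<bar>"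
  shows "linf_norm g \<le> linf_norm g'"
  unfolding linf_norm_def using assms(2) by (intro esssup_mono) auto

lemma lip_seminorm_nonneg:
  shows "0 \<le> lip_seminorm al (wM M)"
proof -
  have m: "fdiff 1 (wM M) \<in> borel_measurable lebesgue" by measurable
  have "0 \<le> ereal (1 powr (-al)) * linf_norm (fdiff 1 (wM M))" using linf_norm_nonneg[OF m] by simp
  also have "\<dots> \<le> lip_seminorm al (wM M)" unfolding lip_seminorm_def by (rule SUP_upper) auto
  finally show ?thesis .
qed

lemma AE_two: "AE t in lebesgue. t \<noteq> (0::real) \<and> t + h \<noteq> 0"
proof -
  have "AE t in lborel. t \<noteq> (0::real)" by (rule AE_lborel_singleton)
  moreover have "AE t in lborel. t \<noteq> (-h::real)" by (rule AE_lborel_singleton)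
  ultimately have "AE t in lborel. t \<noteq> (0::real) \<and> t + h \<noteq> 0" by eventually_elim auto
  then show ?thesis by (simp add: AE_completion_iff)
qed

lemma wM_abs_mono: "0 \<le> M \<Longrightarrow> M \<le> M' \<Longrightarrow> \<bar>wM M t\<bar> \<le> \<bar>wM M' t\<bar>"
  unfolding wM_def using UU_nonneg[of t] by auto

lemma wM_diff_mono: "M \<le> M' \<Longrightarrow> \<bar>fdiff h (wM M) t\<bar> \<le> \<bar>fdiff h (wM M') t\<bar>"
  unfolding wM_def fdiff_def by (auto simp: min_def)

lemma Enorm_mono: assumes "0 \<le> M" "M \<le> M'" shows "Enorm al M \<le> Enorm al M'"
proof -
  have 1: "linf_norm (wM M) \<le> linf_norm (wM M')"
    using wM_abs_mono[OF assms] by (intro linf_norm_mono) auto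
  have 2: "lip_seminorm al (wM M) \<le> lip_seminorm al (wM M')"
    unfolding lip_seminorm_def
  proof (intro SUP_mono bexI)
    fix h :: real assume h: "h \<in> {0<..}"
    show "ereal (h powr - al) * linf_norm (fdiff h (wM M)) \<le> ereal (h powr - al) * linf_norm (fdiff h (wM M'))"
      using wM_diff_mono[OF assms(2)] by (intro ereal_mult_left_mono linf_norm_mono) auto
  qed
  show ?thesis unfolding Enorm_def using 1 2 by (rule add_mono)
qed

lemma Enorm_nonneg: "0 \<le> Enorm al M"
  unfolding Enorm_def using linf_norm_nonneg lip_seminorm_nonneg by (simp add: add_nonneg_nonneg)

lemma wM_zero: "wM 0 = (\<lambda>y. 0)"
  unfolding wM_def using UU_nonneg by (auto simp: min_def)

lemma Enorm_zero: "Enorm al 0 = 0"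
proof -
  have l0: "linf_norm (\<lambda>y::real. 0::real) = 0"
  proof -
    have "(\<lambda>t::real. ereal \<bar>0::real\<bar>) = (\<lambda>t. 0)" by (simp add: zero_ereal_def)
    then show ?thesis unfolding linf_norm_def using esssup_const[OF lebesgue_nonzero, of "0::ereal"] by simp
  qed
  have "fdiff h (\<lambda>y. 0) = (\<lambda>y. 0)" for h unfolding fdiff_def by simp
  then have "lip_seminorm al (\<lambda>y. 0) = 0" unfolding lip_seminorm_def using l0 by simp
  then show ?thesis unfolding Enorm_def wM_zero using l0 by simp
qed

lemma Enorm_bound:
  assumes al: "0 < al" "al < 1"
  obtains C0 where "C0 > 0" "\<And>r. 0 < r \<Longrightarrow> Enorm al (VV r) \<le> ereal (VV r + C0 * r powr (-al) / LL r)"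
proof -
  obtain C0 where C0p: "C0 > 0" and C0: "\<And>r t h. 0 < r \<Longrightarrow> t \<noteq> 0 \<Longrightarrow> t + h \<noteq> 0 \<Longrightarrow> 0 < h \<Longrightarrow>
     \<bar>min (VV r) (UU (t+h)) - min (VV r) (UU t)\<bar> \<le> C0 * (h/r) powr al / LL r"
    using section_diff[OF al] by blast
  have "Enorm al (VV r) \<le> ereal (VV r + C0 * r powr (-al) / LL r)" if r: "0 < r" for r
  proof -
    have 1: "linf_norm (wM (VV r)) \<le> ereal (VV r)"
      by (rule linf_norm_le[OF wM_leb]) (use UU_nonneg VV_nonneg[of r] in \<open>auto simp: wM_def\<close>)
    have 2: "lip_seminorm al (wM (VV r)) \<le> ereal (C0 * r powr (-al) / LL r)"
      unfolding lip_seminorm_def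
    proof (rule SUP_least)
      fix h :: real assume h: "h \<in> {0<..}"
      have "linf_norm (fdiff h (wM (VV r))) \<le> ereal (C0 * (h/r) powr al / LL r)"
      proof (rule linf_norm_le)
        show "AE t in lebesgue. \<bar>fdiff h (wM (VV r)) t\<bar> \<le> C0 * (h/r) powr al / LL r"
          using AE_two[of h] proof eventually_elim
          case (elim t) then show ?case using C0[of r t h] r h unfolding fdiff_def wM_def
            by (simp add: add.commute)
        qed
      qed simp
      then have "ereal (h powr - al) * linf_norm (fdiff h (wM (VV r)))
          \<le> ereal (h powr - al) * ereal (C0 * (h/r) powr al / LL r)"
        by (intro ereal_mult_left_mono) auto
      also have "\<dots> = ereal (C0 * r powr (-al) / LL r)"
      proof -
        have "h powr - al * (h/r) powr al = r powr (-al)"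
          using h r by (simp add: powr_divide powr_minus field_simps)
        then have "h powr - al * (C0 * (h/r) powr al / LL r) = C0 * r powr (-al) / LL r"
          by (metis (no_types, lifting) mult.left_commute times_divide_eq_right)
        then show ?thesis by simp
      qed
      finally show "ereal (h powr - al) * linf_norm (fdiff h (wM (VV r))) \<le> ereal (C0 * r powr (-al) / LL r)" .
    qed
    have "Enorm al (VV r) \<le> ereal (VV r) + ereal (C0 * r powr (-al) / LL r)"
      unfolding Enorm_def using 1 2 by (rule add_mono)
    then show ?thesis by simp
  qed
  then show ?thesis using that C0p by blast
qed

lemma Enorm_finite:
  assumes al: "0 < al" "al < 1" and M: "0 \<le> M"
  shows "Enorm al M < \<infinity>"
proof -
  obtain C0 where C0: "\<And>r. 0 < r \<Longrightarrow> Enorm al (VV r) \<le> ereal (VV r + C0 * r powr (-al) / LL r)"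
    using Enorm_bound[OF al] by blast
  obtain d where d: "d > 0" "\<And>s. 0 < s \<and> s < d \<longrightarrow> VV s > M" using VV_unbounded by blast
  have "VV (d/2) > M" using d by simp
  then have "Enorm al M \<le> Enorm al (VV (d/2))" using M by (intro Enorm_mono) auto
  also have "\<dots> \<le> ereal (VV (d/2) + C0 * (d/2) powr (-al) / LL (d/2))" using C0 d by simp
  finally have "Enorm al M \<le> ereal (VV (d/2) + C0 * (d/2) powr (-al) / LL (d/2))" .
  moreover have "ereal (VV (d/2) + C0 * (d/2) powr (-al) / LL (d/2)) < \<infinity>" by simp
  ultimately show ?thesis by (rule order_le_less_trans)
qed

lemma wM_in_Lip:
  assumes al: "0 < al" "al < 1" and M: "0 \<le> M"
  shows "in_Lip al (wM M)"
proof -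
  have f: "Enorm al M < \<infinity>" by (rule Enorm_finite[OF al M])
  have a: "0 \<le> linf_norm (wM M)" "0 \<le> lip_seminorm al (wM M)"
    using linf_norm_nonneg lip_seminorm_nonneg by auto
  have "linf_norm (wM M) < \<infinity>" "lip_seminorm al (wM M) < \<infinity>"
    using f a unfolding Enorm_def by (auto simp: ereal_add_le_add_iff2 less_top[symmetric])
  then show ?thesis unfolding in_Lip_def in_Linf_def by simp
qed

lemma log_integrable:
  fixes p q :: real assumes p: "p \<ge> 1" and q: "q > 1"
  shows "set_integrable lborel {0<..<2} (\<lambda>t. (p - ln (t/2)) powr (-q) / t)"
proof -
  define F where "F t = (p - ln (t/2)) powr (1-q) / (q-1)" for t
  have P: "p - ln (t/2) > 0" if "0 < t" "t < 2" for t
  proof -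
    have "ln (t/2) < 0" using that by simp
    then show ?thesis using p by simp
  qed
  have D: "(F has_real_derivative (p - ln (t/2)) powr (-q) / t) (at t)" if t: "0 < t" "t < 2" for t
  proof -
    have "(F has_real_derivative ((1-q) * (p - ln (t/2)) powr (1-q-1) * (- (1/2) / (t/2))) / (q-1)) (at t)"
      unfolding F_def using P[OF t] t q
      by (auto intro!: derivative_eq_intros)
    moreover have "((1-q) * (p - ln (t/2)) powr (1-q-1) * (- (1/2) / (t/2))) / (q-1) = (p - ln (t/2)) powr (-q) / t"
      using q t by (simp add: field_simps)
    ultimately show ?thesis by simp
  qed
  have A: "(F \<longlongrightarrow> 0) (at_right 0)"
  proof -
    have "filterlim (\<lambda>t. p - ln (t/2)) at_top (at_right (0::real))" by real_asymp
    then have "((\<lambda>t. (p - ln (t/2)) powr (1-q)) \<longlongrightarrow> 0) (at_right 0)"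
      using q by (intro tendsto_neg_powr) auto
    from tendsto_divide_zero[OF this, of "q-1"] show ?thesis unfolding F_def by simp
  qed
  have B: "(F \<longlongrightarrow> F 2) (at_left 2)"
  proof -
    have "isCont F 2" unfolding F_def using p q by (intro continuous_intros) auto
    then show ?thesis by (simp add: isCont_def filterlim_at_split)
  qed
  have "set_integrable lborel (einterval (ereal 0) (ereal 2)) (\<lambda>t. (p - ln (t/2)) powr (-q) / t)"
  proof (rule interval_integral_FTC_nonneg[where F=F and A=0 and B="F 2"])
    show "ereal 0 < ereal 2" by simp
    show "DERIV F x :> (p - ln (x/2)) powr (-q) / x" if "ereal 0 < ereal x" "ereal x < ereal 2" for x
      using D that by simp
    show "isCont (\<lambda>t. (p - ln (t/2)) powr (-q) / t) x" if "ereal 0 < ereal x" "ereal x < ereal 2" for x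
      using that P[of x] by (intro continuous_intros) auto
    show "AE x in lborel. ereal 0 < ereal x \<longrightarrow> ereal x < ereal 2 \<longrightarrow> 0 \<le> (p - ln (x/2)) powr (-q) / x"
      by auto
    show "((F \<circ> real_of_ereal) \<longlongrightarrow> 0) (at_right (ereal 0))" using A by (simp add: ereal_tendsto_simps1)
    show "((F \<circ> real_of_ereal) \<longlongrightarrow> F 2) (at_left (ereal 2))" using B by (simp add: ereal_tendsto_simps1)
  qed
  then show ?thesis by simp
qed

lemma Bd_mono:
  fixes p r r' :: real assumes p: "p \<ge> 1" and r: "0 < r" "r \<le> r'" "r' < 1"
  shows "r' powr (-(1/p)) / (p - ln r') \<le> r powr (-(1/p)) / (p - ln r)"
proof -
  define d where "d = ln r' - ln r"
  define P' where "P' = p - ln r'"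
  have d0: "d \<ge> 0" unfolding d_def using r by simp
  have P'p: "P' \<ge> p" unfolding P'_def using r by simp
  have e: "r powr (-(1/p)) = r' powr (-(1/p)) * exp ((1/p) * d)"
    using r unfolding d_def by (simp add: powr_def exp_add[symmetric] algebra_simps)
  have "exp ((1/p) * d) \<ge> 1 + (1/p) * d" by (rule exp_ge_add_one_self)
  then have "exp ((1/p) * d) * P' \<ge> (1 + (1/p) * d) * P'" using P'p p by (intro mult_right_mono) auto
  moreover have "(1 + (1/p) * d) * P' \<ge> P' + d"
  proof -
    have "(1/p) * d * P' \<ge> (1/p) * d * p" using P'p p d0 by (intro mult_left_mono) auto
    then show ?thesis using p by (simp add: algebra_simps)
  qed
  ultimately have key: "P' + d \<le> exp ((1/p) * d) * P'" by simp
  have "p - ln r = P' + d" unfolding P'_def d_def by simp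
  have Pp: "P' > 0" using P'p p by simp
  have "r' powr (-(1/p)) / P' \<le> r' powr (-(1/p)) * exp ((1/p) * d) / (P' + d)"
  proof -
    have "r' powr (-(1/p)) * (P' + d) \<le> r' powr (-(1/p)) * (exp ((1/p) * d) * P')"
      using key by (intro mult_left_mono) auto
    then show ?thesis using Pp d0 by (simp add: divide_simps algebra_simps)
  qed
  then show ?thesis unfolding e \<open>p - ln r = P' + d\<close> P'_def[symmetric] .
qed

lemma leb_Ioo: "l \<le> u \<Longrightarrow> emeasure lebesgue {l<..<u::real} = ennreal (u - l)"
  by (simp add: emeasure_completion)

lemma Lpq_criterion:
  fixes g :: "real \<Rightarrow> real" and p q Cb :: real
  assumes p: "p > 1" and q: "q > 1" and Cb: "Cb \<ge> 0"
    and gm[measurable]: "g \<in> borel_measurable lebesgue"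
    and zero: "\<And>x. x = 0 \<or> \<bar>x\<bar> \<ge> 1 \<Longrightarrow> g x = 0"
    and bd: "\<And>x. 0 < \<bar>x\<bar> \<Longrightarrow> \<bar>x\<bar> < 1 \<Longrightarrow> \<bar>g x\<bar> \<le> Cb * \<bar>x\<bar> powr (-(1/p)) / (p - ln \<bar>x\<bar>)"
  shows "in_Lpq p q g"
proof -
  define S where "S t = (if t < 2 then Cb * (t/2) powr (-(1/p)) / (p - ln (t/2)) else 0)" for t
  have S0: "S t \<ge> 0" if "t > 0" for t
  proof (cases "t < 2")
    case True
    then have "ln (t/2) < 0" using that by simp
    then show ?thesis unfolding S_def using True Cb p by simp
  qed (simp add: S_def)
  have sub: "{x. S t < \<bar>g x\<bar>} \<subseteq> {- min 1 (t/2) <..< min 1 (t/2)}" if t: "t > 0" for t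
  proof
    fix x assume x: "x \<in> {x. S t < \<bar>g x\<bar>}"
    show "x \<in> {- min 1 (t/2) <..< min 1 (t/2)}"
    proof (rule ccontr)
      assume "x \<notin> {- min 1 (t/2) <..< min 1 (t/2)}"
      then have ax: "\<bar>x\<bar> \<ge> min 1 (t/2)" by auto
      show False
      proof (cases "x = 0 \<or> \<bar>x\<bar> \<ge> 1")
        case True then show False using x zero S0[OF t] by simp
      next
        case False
        then have x1: "0 < \<bar>x\<bar>" "\<bar>x\<bar> < 1" by auto
        then have t2: "t < 2" "t/2 \<le> \<bar>x\<bar>" using ax by (auto simp: min_def split: if_splits)
        have "\<bar>g x\<bar> \<le> Cb * \<bar>x\<bar> powr (-(1/p)) / (p - ln \<bar>x\<bar>)" using bd x1 by simp
        also have "\<dots> = Cb * (\<bar>x\<bar> powr (-(1/p)) / (p - ln \<bar>x\<bar>))" by simp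
        also have "\<dots> \<le> Cb * ((t/2) powr (-(1/p)) / (p - ln (t/2)))"
          using Bd_mono[of p "t/2" "\<bar>x\<bar>"] p t t2 x1 Cb by (intro mult_left_mono) auto
        also have "\<dots> = S t" unfolding S_def using t2 by simp
        finally show False using x by simp
      qed
    qed
  qed
  have distr: "distr_fun g (S t) \<le> ennreal t" if t: "t > 0" for t
  proof -
    have "distr_fun g (S t) \<le> emeasure lebesgue {- min 1 (t/2) <..< min 1 (t/2)}"
      unfolding distr_fun_def using sub[OF t] by (intro emeasure_mono) auto
    also have "\<dots> = ennreal (2 * min 1 (t/2))" using t by (subst leb_Ioo) auto
    also have "\<dots> \<le> ennreal t" by (intro ennreal_leI) auto
    finally show ?thesis .
  qed
  have rearr: "0 \<le> rearr g t \<and> rearr g t \<le> S t" if t: "t > 0" for t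
  proof -
    let ?A = "{s. 0 \<le> s \<and> distr_fun g s \<le> ennreal t}"
    have inA: "S t \<in> ?A" using S0[OF t] distr[OF t] by simp
    have bdd: "bdd_below ?A" by (rule bdd_belowI[of _ 0]) auto
    have "rearr g t \<le> S t" unfolding rearr_def by (rule cInf_lower[OF inA bdd])
    moreover have "0 \<le> rearr g t" unfolding rearr_def using inA by (intro cInf_greatest) auto
    ultimately show ?thesis by simp
  qed
  have distrfin: "distr_fun g s < \<infinity>" if s: "s > 0" for s
  proof -
    have "{x. s < \<bar>g x\<bar>} \<subseteq> {-1<..<1}"
    proof
      fix x assume x: "x \<in> {x. s < \<bar>g x\<bar>}"
      have "\<not> (x = 0 \<or> \<bar>x\<bar> \<ge> 1)"
      proof
        assume "x = 0 \<or> \<bar>x\<bar> \<ge> 1"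
        then have "g x = 0" by (rule zero)
        then show False using x s by simp
      qed
      then show "x \<in> {-1<..<1}" by auto
    qed
    then have "distr_fun g s \<le> emeasure lebesgue {-1<..<1::real}"
      unfolding distr_fun_def by (rule emeasure_mono) simp
    also have "\<dots> = ennreal 2" by (subst leb_Ioo) auto
    finally have "distr_fun g s \<le> ennreal 2" .
    moreover have "ennreal 2 < \<infinity>" by simp
    ultimately show ?thesis by (rule order_le_less_trans)
  qed
  define H where "H t = (p - ln (t/2)) powr (-q) / t" for t
  define K where "K = (Cb * 2 powr (1/p)) powr q"
  have K0: "K \<ge> 0" unfolding K_def by simp
  have ptw: "ennreal ((t powr (1/p) * rearr g t) powr q / t) * indicator {0<..} t
      \<le> ennreal (K * (indicator {0<..<2} t *\<^sub>R H t))" for t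
  proof (cases "t > 0")
    case False then show ?thesis by simp
  next
    case t: True
    show ?thesis
    proof (cases "t < 2")
      case False
      then have "rearr g t = 0" using rearr[OF t] by (simp add: S_def)
      then show ?thesis by simp
    next
      case True
      have "ln (t/2) < 0" using True t by simp
      then have P: "p - ln (t/2) > 0" using p by simp
      have "t powr (1/p) * rearr g t \<le> t powr (1/p) * S t" using rearr[OF t] by (intro mult_left_mono) auto
      also have "t powr (1/p) * S t = Cb * 2 powr (1/p) / (p - ln (t/2))"
      proof -
        have "t powr (1/p) * (t/2) powr (-(1/p)) = 2 powr (1/p)"
          using t by (simp add: powr_divide powr_minus field_simps)
        moreover have St: "S t = Cb * (t/2) powr (-(1/p)) / (p - ln (t/2))" unfolding S_def using True by simp
        moreover have "t powr (1/p) * S t = Cb * (t powr (1/p) * (t/2) powr (-(1/p))) / (p - ln (t/2))"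
          unfolding St by simp
        ultimately show ?thesis by simp
      qed
      finally have le1: "t powr (1/p) * rearr g t \<le> Cb * 2 powr (1/p) / (p - ln (t/2))" .
      have "(t powr (1/p) * rearr g t) powr q / t \<le> (Cb * 2 powr (1/p) / (p - ln (t/2))) powr q / t"
        using le1 rearr[OF t] t q by (intro divide_right_mono powr_mono2) auto
      also have "\<dots> = K * H t"
        unfolding K_def H_def using P Cb t by (simp add: powr_divide powr_minus_divide field_simps)
      finally have "(t powr (1/p) * rearr g t) powr q / t \<le> K * H t" .
      then show ?thesis using t True by (simp add: ennreal_leI)
    qed
  qed
  have int: "set_integrable lborel {0<..<2} H" unfolding H_def using log_integrable[of p q] p q by simp
  have fin: "(\<integral>\<^sup>+ t. ennreal (indicator {0<..<2} t *\<^sub>R H t) \<partial>lborel) \<noteq> \<infinity>"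
    using integrableD(2)[OF int[unfolded set_integrable_def]] by simp
  have "(\<integral>\<^sup>+ t \<in> {0<..}. ennreal ((t powr (1/p) * rearr g t) powr q / t) \<partial>lborel)
      \<le> (\<integral>\<^sup>+ t. ennreal (K * (indicator {0<..<2} t *\<^sub>R H t)) \<partial>lborel)"
    by (intro nn_integral_mono) (use ptw in simp)
  also have "\<dots> = ennreal K * (\<integral>\<^sup>+ t. ennreal (indicator {0<..<2} t *\<^sub>R H t) \<partial>lborel)"
  proof -
    have "H t \<ge> 0" if "0 < t" "t < 2" for t
      unfolding H_def using that by simp
    then have "(\<lambda>t. ennreal (K * (indicator {0<..<2} t *\<^sub>R H t))) = (\<lambda>t. ennreal K * ennreal (indicator {0<..<2} t *\<^sub>R H t))"
      using K0 by (auto simp: ennreal_mult indicator_def fun_eq_iff)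
    moreover have mH: "(\<lambda>t. indicator {0<..<2} t *\<^sub>R H t) \<in> borel_measurable lborel"
      using integrableD(1)[OF int[unfolded set_integrable_def]] by simp
    then have mE: "(\<lambda>t. ennreal (indicator {0<..<2} t *\<^sub>R H t)) \<in> borel_measurable lborel"
      by (rule measurable_compose) simp
    ultimately show ?thesis using nn_integral_cmult[OF mE, of K] by simp
  qed
  also have "\<dots> < \<infinity>" using fin by (simp add: ennreal_mult_less_top less_top)
  finally have "(\<integral>\<^sup>+ t \<in> {0<..}. ennreal ((t powr (1/p) * rearr g t) powr q / t) \<partial>lborel) < \<infinity>" .
  then show ?thesis unfolding in_Lpq_def using gm distrfin by blast
qed

lemma uu_bound:
  fixes al :: real assumes al: "0 < al" "al < 1"
  shows "\<exists>C2>0. \<forall>r. 0 < r \<and> r < 1 \<longrightarrow> uu r \<le> C2 * r powr (-al) / LL r"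
proof -
  define C2 where "C2 = 2 * (1 + 2/al)^2"
  have "uu r \<le> C2 * r powr (-al) / LL r" if r: "0 < r" "r < 1" for r
  proof -
    define X where "X = (2/r) powr (al/2)"
    have X1: "X \<ge> 1" unfolding X_def using r al by (intro ge_one_powr_ge_zero) auto
    have L1: "LL r > 1" using LL_ge1 r by simp
    have "1 + 1/r \<le> 2/r" using r by (simp add: field_simps)
    then have "ln (1 + 1/r) \<le> ln (2/r)" using r by (subst ln_le_cancel_iff) (auto simp: add_pos_pos)
    also have "ln (2/r) \<le> (2/r) powr (al/2) / (al/2)" using r al by (intro ln_le_powr) auto
    finally have "LL r \<le> 1 + (2/al) * X" unfolding LL_def X_def by (simp add: mult.commute)
    also have "\<dots> \<le> (1 + 2/al) * X" using X1 by (simp add: algebra_simps)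
    finally have LX: "LL r \<le> (1 + 2/al) * X" .
    have "uu r \<le> LL r - 1" unfolding uu_def using L1 by (intro ln_le_minus_one) simp
    then have uL: "uu r \<le> LL r" by simp
    have "uu r * LL r \<le> LL r * LL r" using uL L1 by (intro mult_right_mono) auto
    also have "\<dots> \<le> ((1 + 2/al) * X) * ((1 + 2/al) * X)" using LX L1 by (intro mult_mono) auto
    also have "\<dots> = (1 + 2/al)^2 * (X * X)" by (simp add: power2_eq_square)
    also have "X * X = (2/r) powr al" unfolding X_def using r by (simp add: powr_add[symmetric])
    also have "(2/r) powr al = 2 powr al * r powr (-al)"
    proof -
      have "(2/r) powr al = 2 powr al / r powr al" using r by (auto intro: powr_divide)
      also have "\<dots> = 2 powr al * r powr (-al)" by (simp add: powr_minus_divide)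
      finally show ?thesis .
    qed
    also have "(1 + 2/al)^2 * (2 powr al * r powr (-al)) \<le> (1 + 2/al)^2 * (2 * r powr (-al))"
    proof -
      have "(2::real) powr al \<le> 2" using powr_mono[of al 1 2] al by simp
      then show ?thesis by (intro mult_left_mono mult_right_mono) auto
    qed
    also have "\<dots> = C2 * r powr (-al)" unfolding C2_def by simp
    finally have "uu r * LL r \<le> C2 * r powr (-al)" .
    then show ?thesis using L1 by (simp add: pos_le_divide_eq)
  qed
  moreover have "C2 > 0"
  proof -
    have "1 + 2/al > 0" using al by (simp add: add_pos_pos)
    then show ?thesis unfolding C2_def by simp
  qed
  ultimately show ?thesis by blast
qed

lemma roe_le: "0 \<le> E \<Longrightarrow> E \<le> ereal B \<Longrightarrow> real_of_ereal E \<le> B"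
  by (cases E) auto

lemma final_bound:
  fixes p :: real assumes p: "p > 1"
  shows "\<exists>Cb\<ge>0. \<forall>r. 0 < r \<and> r < 1 \<longrightarrow> real_of_ereal (Enorm (1/p) (VV r)) \<le> Cb * r powr (-(1/p)) / (p - ln r)"
proof -
  have al: "0 < 1/p" "1/p < 1" using p by auto
  obtain C0 where C0p: "C0 > 0" and C0: "\<And>r. 0 < r \<Longrightarrow> Enorm (1/p) (VV r) \<le> ereal (VV r + C0 * r powr (-(1/p)) / LL r)"
    using Enorm_bound[OF al] by blast
  obtain C2 where C2p: "C2 > 0" and C2: "\<And>r. 0 < r \<Longrightarrow> r < 1 \<Longrightarrow> uu r \<le> C2 * r powr (-(1/p)) / LL r"
    using uu_bound[OF al] by blast
  define Cb where "Cb = (C2 + C0) * p"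
  have "real_of_ereal (Enorm (1/p) (VV r)) \<le> Cb * r powr (-(1/p)) / (p - ln r)" if r: "0 < r" "r < 1" for r
  proof -
    have L1: "LL r > 1" using LL_ge1 r by simp
    have lr: "ln r < 0" using r by simp
    have B0: "0 \<le> VV r + C0 * r powr (-(1/p)) / LL r" using VV_nonneg[of r] C0p L1 by simp
    have "real_of_ereal (Enorm (1/p) (VV r)) \<le> VV r + C0 * r powr (-(1/p)) / LL r"
      using C0[OF r(1)] B0 Enorm_nonneg[of "1/p" "VV r"]
      by (intro roe_le) auto
    also have "VV r \<le> C2 * r powr (-(1/p)) / LL r" using VV_le_uu[of r] C2[OF r] r by simp
    then have "VV r + C0 * r powr (-(1/p)) / LL r \<le> (C2 + C0) * r powr (-(1/p)) / LL r"
      by (simp add: add_divide_distrib distrib_right)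
    also have "\<dots> = (C2 + C0) * r powr (-(1/p)) * (1 / LL r)" by simp
    also have "1 / LL r \<le> p / (p - ln r)"
    proof -
      have e1: "- ln r = ln (1/r)" using r by (simp add: ln_div)
      have "ln (1/r) \<le> ln (1 + 1/r)" using r by (subst ln_le_cancel_iff) (auto simp: add_pos_pos)
      also have "ln (1 + 1/r) \<le> p * ln (1 + 1/r)"
      proof -
        have "0 \<le> ln (1 + 1/r)" using r by simp
        then show ?thesis using p by (simp add: mult_le_cancel_right1)
      qed
      finally have "- ln r \<le> p * ln (1 + 1/r)" using e1 by simp
      then have "p - ln r \<le> p * LL r" unfolding LL_def by (simp add: algebra_simps)
      then show ?thesis using L1 lr p by (simp add: divide_simps)
    qed
    then have "(C2 + C0) * r powr (-(1/p)) * (1 / LL r) \<le> (C2 + C0) * r powr (-(1/p)) * (p / (p - ln r))"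
      using C0p C2p by (intro mult_left_mono) auto
    also have "\<dots> = Cb * r powr (-(1/p)) / (p - ln r)" unfolding Cb_def by simp
    finally show ?thesis .
  qed
  moreover have "Cb \<ge> 0" unfolding Cb_def using C0p C2p p by simp
  ultimately show ?thesis by blast
qed

definition ff :: "real \<times> real \<Rightarrow> real" where "ff z = min (UU (fst z)) (UU (snd z))"

lemma ff_borel: "ff \<in> borel_measurable borel"
proof -
  have "(\<lambda>z::real\<times>real. fst z) \<in> borel_measurable borel" by (rule borel_measurable_continuous_onI) (intro continuous_intros)
  moreover have "(\<lambda>z::real\<times>real. snd z) \<in> borel_measurable borel" by (rule borel_measurable_continuous_onI) (intro continuous_intros)
  ultimately show ?thesis unfolding ff_def by measurable
qed

lemma sec1: "(\<lambda>y. ff (x, y)) = wM (UU x)" unfolding ff_def wM_def by simp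
lemma sec2: "(\<lambda>x. ff (x, y)) = wM (UU y)" unfolding ff_def wM_def by (simp add: min.commute)

lemma lip_norm_eq: "lip_norm al (wM M) = real_of_ereal (Enorm al M)"
  unfolding lip_norm_def Enorm_def by simp

lemma G_Lpq:
  fixes p q :: real assumes p: "1 < p" and q: "1 < q"
  shows "in_Lpq p q (\<lambda>x. real_of_ereal (Enorm (1/p) (UU x)))"
proof -
  have al: "0 < 1/p" "1/p < 1" using p by auto
  obtain Cb where Cb: "Cb \<ge> 0" and B: "\<And>r. 0 < r \<Longrightarrow> r < 1 \<Longrightarrow> real_of_ereal (Enorm (1/p) (VV r)) \<le> Cb * r powr (-(1/p)) / (p - ln r)"
    using final_bound[OF p] by blast
  define N where "N M = real_of_ereal (Enorm (1/p) (max 0 M))" for M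
  have "mono N"
  proof
    fix M M' :: real assume "M \<le> M'"
    then have "Enorm (1/p) (max 0 M) \<le> Enorm (1/p) (max 0 M')" by (intro Enorm_mono) auto
    moreover have "Enorm (1/p) (max 0 M') \<noteq> \<infinity>" using Enorm_finite[OF al, of "max 0 M'"] by auto
    ultimately show "N M \<le> N M'" unfolding N_def using Enorm_nonneg
      by (intro real_of_ereal_positive_mono) auto
  qed
  then have Nm: "N \<in> borel_measurable borel" by (rule borel_measurable_mono)
  have eq: "(\<lambda>x. real_of_ereal (Enorm (1/p) (UU x))) = (\<lambda>x. N (UU x))"
    unfolding N_def using UU_nonneg by (simp add: max_def)
  have m: "(\<lambda>x. real_of_ereal (Enorm (1/p) (UU x))) \<in> borel_measurable lebesgue"
    unfolding eq by (intro borel_to_lebesgue measurable_compose[OF UU_measurable Nm])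
  show ?thesis
  proof (rule Lpq_criterion[OF p q Cb m])
    fix x :: real assume "x = 0 \<or> \<bar>x\<bar> \<ge> 1"
    then have "UU x = 0" by (rule UU_zero)
    then show "real_of_ereal (Enorm (1/p) (UU x)) = 0" using Enorm_zero by simp
  next
    fix x :: real assume x: "0 < \<bar>x\<bar>" "\<bar>x\<bar> < 1"
    have "UU x = VV \<bar>x\<bar>" unfolding UU_def by simp
    then have e: "real_of_ereal (Enorm (1/p) (UU x)) = real_of_ereal (Enorm (1/p) (VV \<bar>x\<bar>))" by simp
    have nn: "0 \<le> real_of_ereal (Enorm (1/p) (VV \<bar>x\<bar>))" using Enorm_nonneg
      by (simp add: real_of_ereal_pos)
    show "\<bar>real_of_ereal (Enorm (1/p) (UU x))\<bar> \<le> Cb * \<bar>x\<bar> powr (-(1/p)) / (p - ln \<bar>x\<bar>)"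
      unfolding e abs_of_nonneg[OF nn] by (rule B[OF x])
  qed
qed

lemma ff_not_Linf: "\<not> in_Linf ff"
proof
  assume "in_Linf ff"
  then have fin: "linf_norm ff < \<infinity>" unfolding in_Linf_def by simp
  obtain c where c: "linf_norm ff \<le> ereal c"
  proof (cases "linf_norm ff")
    case (real r) then show ?thesis using that[of r] by simp
  next
    case PInf then show ?thesis using fin by simp
  next
    case MInf then show ?thesis using that[of 0] by simp
  qed
  have "AE z in lebesgue. ereal \<bar>ff z\<bar> \<le> linf_norm ff" unfolding linf_norm_def by (rule esssup_AE)
  then have "AE z in lebesgue. \<bar>ff z\<bar> \<le> c"
  proof (rule eventually_mono)
    fix z assume "ereal \<bar>ff z\<bar> \<le> linf_norm ff"
    then have "ereal \<bar>ff z\<bar> \<le> ereal c" using c by (rule order_trans)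
    then show "\<bar>ff z\<bar> \<le> c" by simp
  qed
  then have ae: "AE z in lborel. \<bar>ff z\<bar> \<le> c" by (simp add: AE_completion_iff)
  obtain d where d: "d > 0" "\<And>s. 0 < s \<and> s < d \<longrightarrow> VV s > c" using VV_unbounded by blast
  obtain N where N2: "{z \<in> space lborel. \<not> \<bar>ff z\<bar> \<le> c} \<subseteq> N" and N0: "emeasure lborel N = 0"
    and Ns: "N \<in> sets lborel"
    using AE_E[OF ae] by blast
  have N: "N \<in> null_sets lborel" "{z \<in> space lborel. \<not> \<bar>ff z\<bar> \<le> c} \<subseteq> N"
    using N0 Ns N2 by auto
  have sub: "box (0,0) (d,d) \<subseteq> N"
  proof
    fix z :: "real \<times> real" assume z: "z \<in> box (0,0) (d,d)"
    obtain a b where ab: "z = (a,b)" by (cases z)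
    have "0 < a" "a < d" "0 < b" "b < d" using z ab by (auto simp: box_def Basis_prod_def)
    then have "UU a > c" "UU b > c" using d unfolding UU_def by auto
    then have "\<not> \<bar>ff z\<bar> \<le> c" unfolding ff_def ab by simp
    then show "z \<in> N" using N(2) by auto
  qed
  have "emeasure lborel (box (0,0) (d,d::real)) \<le> emeasure lborel N"
    using sub N(1) by (intro emeasure_mono) auto
  also have "\<dots> = 0" using N(1) by auto
  finally have "emeasure lborel (box (0::real,0::real) (d,d)) = 0" by simp
  moreover have "emeasure lborel (box (0::real,0::real) (d,d)) = ennreal (d * d)"
  proof -
    have "emeasure lborel (box (0::real,0::real) (d,d)) = (\<Prod>b\<in>Basis. ((d,d) - (0::real,0::real)) \<bullet> b)"
      by (rule emeasure_lborel_box) (use d in \<open>auto simp: Basis_prod_def\<close>)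
    also have "(\<Prod>b\<in>Basis. ((d,d) - (0::real,0::real)) \<bullet> b) = d * d"
      by (simp add: Basis_prod_def prod.union_disjoint disjoint_iff)
    finally show ?thesis by simp
  qed
  ultimately show False using d by simp
qed

theorem proposition2p2:
  fixes p q :: real
  assumes "1 < p" and "1 < q"
  shows "\<exists>f :: real \<times> real \<Rightarrow> real.
           f \<in> borel_measurable lebesgue \<and>
           (AE x in lborel. in_Lip (1/p) (\<lambda>y. f (x, y))) \<and>
           (AE y in lborel. in_Lip (1/p) (\<lambda>x. f (x, y))) \<and>
           in_Lpq p q (\<lambda>x. lip_norm (1/p) (\<lambda>y. f (x, y))) \<and>
           in_Lpq p q (\<lambda>y. lip_norm (1/p) (\<lambda>x. f (x, y))) \<and>
           \<not> in_Linf f"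
proof (intro exI conjI)
  have al: "0 < 1/p" "1/p < 1" using assms by auto
  show "ff \<in> borel_measurable lebesgue" by (rule borel_to_lebesgue[OF ff_borel])
  show "AE x in lborel. in_Lip (1/p) (\<lambda>y. ff (x, y))"
    unfolding sec1 using wM_in_Lip[OF al UU_nonneg] by simp
  show "AE y in lborel. in_Lip (1/p) (\<lambda>x. ff (x, y))"
    unfolding sec2 using wM_in_Lip[OF al UU_nonneg] by simp
  show "in_Lpq p q (\<lambda>x. lip_norm (1/p) (\<lambda>y. ff (x, y)))"
    unfolding sec1 lip_norm_eq using G_Lpq[OF assms] .
  show "in_Lpq p q (\<lambda>y. lip_norm (1/p) (\<lambda>x. ff (x, y)))"
    unfolding sec2 lip_norm_eq using G_Lpq[OF assms] .
  show "\<not> in_Linf ff" by (rule ff_not_Linf)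
qed

end
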